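(* Let $\widetilde G=(\widetilde N,\widetilde E)$ be a directed graph in which every edge $(\tilde n_1,\tilde n_2)\in\widetilde E$ carries a delay $\widetilde D_{\tilde n_1,\tilde n_2}\ge 0$ and a reliability $\widetilde\eta_{\tilde n_1,\tilde n_2}\in(0,1]$. Let $D(s)>0$ be a target delay, $H(s)\in(0,1)$ a target reliability, and $\gamma$ a positive integer. Assign to each edge the weight $$\tilde w(\tilde n_1,\tilde n_2)=\Big(\tilde w_0,\tilde w_1\Big)=\left(\frac{\widetilde D_{\tilde n_1,\tilde n_2}}{D(s)},\ \frac{\log\widetilde\eta_{\tilde n_1,\tilde n_2}}{\log H(s)}\right).$$ Define the expanded graph as follows: its vertices are $\tilde n^{i,j}$ for every $\tilde n\in\widetilde N$ and all integers $0\le i,j\le\gamma$; for every edge $(\tilde n_1,\tilde n_2)\in\widetilde E$ (among those retained, e.g. those with sufficient capacity) and every $i,j$, there is an (unweighted) directed edge from $\tilde n_1^{i,j}$ to $\tilde n_2^{\,i+\lceil\gamma\tilde w_0(\tilde n_1,\tilde n_2)\rceil,\ j+\lceil\gamma \tilde w_1(\tilde n_1,\tilde n_2)\rceil}$ whenever both superscripts are at most $\gamma$ (otherwise no edge is created). Then for any path in the expanded graph starting at a vertex of the form $e^{0,0}$, the corresponding path $e=\tilde n_0,\tilde n_1,\dots,\tilde n_m$ in $\widetilde G$ satisfies $$\sum_{k=1}^{m}\widetilde D_{\tilde n_{k-1},\tilde n_k}\le D(s)\quad\text{and}\quad\prod_{k=1}^{m}\widetilde\eta_{\tilde n_{k-1},\tilde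 n_k}\ge H(s),$$ i.e. it honors the additive KPI targets (network delay and reliability).
   Context: In the paper's network-slicing setting, $\widetilde G$ is the "decision graph": its vertices are service endpoints and computation-capable nodes (with replicas), and an edge $(\tilde n_1,\tilde n_2)$ represents deploying a virtual network function at $\tilde n_1$ and the next one at $\tilde n_2$, connected via a virtual link whose delay is the sum of the delays and whose reliability is the product of the reliabilities of the physical links and nodes composing it. The vertex $e^{0,0}$ is the copy of an endpoint $e$ with both superscripts equal to zero. *)

theory Defs
  imports Complex_Main
begin

definition w0 :: "('v \<Rightarrow> 'v \<Rightarrow> real) \<Rightarrow> real \<Rightarrow> 'v \<Rightarrow> 'v \<Rightarrow> real" where
  "w0 Dl Ds n1 n2 = Dl n1 n2 / Ds"

definition w1 :: "('v \<Rightarrow> 'v \<Rightarrow> real) \<Rightarrow> real \<Rightarrow> 'v \<Rightarrow> 'v \<Rightarrow> real" where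
  "w1 eta Hs n1 n2 = ln (eta n1 n2) / ln Hs"

definition exp_vertices :: "'v set \<Rightarrow> nat \<Rightarrow> ('v \<times> nat \<times> nat) set" where
  "exp_vertices N \<gamma> = N \<times> {0..\<gamma>} \<times> {0..\<gamma>}"

definition exp_edges ::
  "'v set \<Rightarrow> ('v \<times> 'v) set \<Rightarrow> ('v \<Rightarrow> 'v \<Rightarrow> real) \<Rightarrow> ('v \<Rightarrow> 'v \<Rightarrow> real)
   \<Rightarrow> real \<Rightarrow> real \<Rightarrow> nat \<Rightarrow> (('v \<times> nat \<times> nat) \<times> ('v \<times> nat \<times> nat)) set" where
  "exp_edges N E Dl eta Ds Hs \<gamma> =
     {((n1, i, j), (n2, i', j')) | n1 n2 i j i' j'.
        (n1, n2) \<in> E \<and> i \<le> \<gamma> \<and> j \<le> \<gamma> \<and>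
        int i' = int i + \<lceil>real \<gamma> * w0 Dl Ds n1 n2\<rceil> \<and>
        int j' = int j + \<lceil>real \<gamma> * w1 eta Hs n1 n2\<rceil> \<and>
        i' \<le> \<gamma> \<and> j' \<le> \<gamma>}"

definition is_path :: "'a set \<Rightarrow> ('a \<times> 'a) set \<Rightarrow> 'a list \<Rightarrow> bool" where
  "is_path V A ps \<longleftrightarrow> ps \<noteq> [] \<and> set ps \<subseteq> V \<and>
     (\<forall>k. Suc k < length ps \<longrightarrow> (ps ! k, ps ! Suc k) \<in> A)"

end

theory Submission
  imports Defs
begin

lemma step_edge:
  assumes "((n1, i, j), (n2, i', j')) \<in> exp_edges N E Dl eta Ds Hs \<gamma>"
  shows "(n1, n2) \<in> E \<and> real i' \<ge> real i + real \<gamma> * w0 Dl Ds n1 n2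
         \<and> real j' \<ge> real j + real \<gamma> * w1 eta Hs n1 n2"
proof -
  from assms have E: "(n1, n2) \<in> E"
    and a: "int i' = int i + \<lceil>real \<gamma> * w0 Dl Ds n1 n2\<rceil>"
    and b: "int j' = int j + \<lceil>real \<gamma> * w1 eta Hs n1 n2\<rceil>"
    unfolding exp_edges_def by auto
  have "real_of_int (int i') \<ge> real i + real \<gamma> * w0 Dl Ds n1 n2"
    unfolding a using le_of_int_ceiling by (simp add: add_mono)
  moreover have "real_of_int (int j') \<ge> real j + real \<gamma> * w1 eta Hs n1 n2"
    unfolding b using le_of_int_ceiling by (simp add: add_mono)
  ultimately show ?thesis using E by simp
qed

theorem lemma1:
  fixes N :: "'v set" and E :: "('v \<times> 'v) set"
    and Dl eta :: "'v \<Rightarrow> 'v \<Rightarrow> real"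
    and Ds Hs :: real and \<gamma> :: nat
    and e :: 'v and ps :: "('v \<times> nat \<times> nat) list"
  assumes E_sub: "E \<subseteq> N \<times> N"
    and D_nonneg: "\<And>n1 n2. (n1, n2) \<in> E \<Longrightarrow> Dl n1 n2 \<ge> 0"
    and eta_pos: "\<And>n1 n2. (n1, n2) \<in> E \<Longrightarrow> 0 < eta n1 n2 \<and> eta n1 n2 \<le> 1"
    and Ds_pos: "Ds > 0"
    and Hs_range: "0 < Hs" "Hs < 1"
    and gamma_pos: "\<gamma> > 0"
    and path: "is_path (exp_vertices N \<gamma>) (exp_edges N E Dl eta Ds Hs \<gamma>) ps"
    and start: "hd ps = (e, 0, 0)"
  shows "(\<Sum>k<length ps - 1. Dl (fst (ps ! k)) (fst (ps ! Suc k))) \<le> Ds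
       \<and> (\<Prod>k<length ps - 1. eta (fst (ps ! k)) (fst (ps ! Suc k))) \<ge> Hs"
proof -
  define a where "a k = fst (snd (ps ! k))" for k
  define b where "b k = snd (snd (ps ! k))" for k
  define n where "n k = fst (ps ! k)" for k
  have ne: "ps \<noteq> []" and sub: "set ps \<subseteq> exp_vertices N \<gamma>"
    and edges: "\<And>k. Suc k < length ps \<Longrightarrow> (ps ! k, ps ! Suc k) \<in> exp_edges N E Dl eta Ds Hs \<gamma>"
    using path unfolding is_path_def by auto
  have ps_eq: "ps ! k = (n k, a k, b k)" for k unfolding a_def b_def n_def by simp
  have st: "\<And>k. Suc k < length ps \<Longrightarrow> (n k, n (Suc k)) \<in> E
      \<and> real (a (Suc k)) \<ge> real (a k) + real \<gamma> * w0 Dl Ds (n k) (n (Suc k))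
      \<and> real (b (Suc k)) \<ge> real (b k) + real \<gamma> * w1 eta Hs (n k) (n (Suc k))"
    using edges step_edge unfolding ps_eq by metis
  have first: "a 0 = 0" "b 0 = 0" using start ne unfolding a_def b_def
    by (auto simp: hd_conv_nth)
  have inv: "k < length ps \<Longrightarrow>
      real \<gamma> * (\<Sum>l<k. w0 Dl Ds (n l) (n (Suc l))) \<le> real (a k) \<and>
      real \<gamma> * (\<Sum>l<k. w1 eta Hs (n l) (n (Suc l))) \<le> real (b k)" for k
  proof (induction k)
    case 0 then show ?case using first by simp
  next
    case (Suc k)
    then have IH: "real \<gamma> * (\<Sum>l<k. w0 Dl Ds (n l) (n (Suc l))) \<le> real (a k)"
       "real \<gamma> * (\<Sum>l<k. w1 eta Hs (n l) (n (Suc l))) \<le> real (b k)" by auto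
    from st[OF Suc.prems] IH show ?case by (simp add: distrib_left)
  qed
  define m where "m = length ps - 1"
  have m: "m < length ps" using ne unfolding m_def by simp
  have "ps ! m \<in> exp_vertices N \<gamma>" using sub m by auto
  then have bd: "a m \<le> \<gamma>" "b m \<le> \<gamma>" unfolding ps_eq exp_vertices_def by auto
  have g: "real \<gamma> > 0" using gamma_pos by simp
  have s0: "(\<Sum>l<m. w0 Dl Ds (n l) (n (Suc l))) \<le> 1"
  proof -
    have "real \<gamma> * (\<Sum>l<m. w0 Dl Ds (n l) (n (Suc l))) \<le> real \<gamma> * 1"
      using inv[OF m] bd by simp
    then show ?thesis using g by simp
  qed
  have s1: "(\<Sum>l<m. w1 eta Hs (n l) (n (Suc l))) \<le> 1"
  proof -
    have "real \<gamma> * (\<Sum>l<m. w1 eta Hs (n l) (n (Suc l))) \<le> real \<gamma> * 1"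
      using inv[OF m] bd by simp
    then show ?thesis using g by simp
  qed
  have Em: "\<And>l. l < m \<Longrightarrow> (n l, n (Suc l)) \<in> E" using st unfolding m_def by auto
  have "(\<Sum>l<m. w0 Dl Ds (n l) (n (Suc l))) = (\<Sum>l<m. Dl (n l) (n (Suc l))) / Ds"
    unfolding w0_def by (simp add: sum_divide_distrib)
  then have A: "(\<Sum>l<m. Dl (n l) (n (Suc l))) \<le> Ds" using s0 Ds_pos by simp
  have lnH: "ln Hs < 0" using Hs_range by simp
  have "(\<Sum>l<m. w1 eta Hs (n l) (n (Suc l))) = (\<Sum>l<m. ln (eta (n l) (n (Suc l)))) / ln Hs"
    unfolding w1_def by (simp add: sum_divide_distrib)
  then have "(\<Sum>l<m. ln (eta (n l) (n (Suc l)))) \<ge> ln Hs" using s1 lnH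
    by (simp add: divide_le_eq)
  moreover have "(\<Sum>l<m. ln (eta (n l) (n (Suc l)))) = ln (\<Prod>l<m. eta (n l) (n (Suc l)))"
  proof -
    have "\<And>l. l \<in> {..<m} \<Longrightarrow> eta (n l) (n (Suc l)) \<noteq> 0"
      using Em eta_pos by (metis lessThan_iff less_irrefl)
    then show ?thesis by (subst ln_prod) auto
  qed
  moreover have "(\<Prod>l<m. eta (n l) (n (Suc l))) > 0"
    using Em eta_pos by (intro prod_pos) (metis lessThan_iff)
  ultimately have B: "(\<Prod>l<m. eta (n l) (n (Suc l))) \<ge> Hs"
    using Hs_range by simp
  show ?thesis using A B unfolding m_def n_def by simp
qed

end
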